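(* Let $\gamma\in(0,1]$ with $1-2\sqrt{\log(4/\gamma)/n}>0$, let $\epsilon>0$, let $\vec Q\in\mathbb R^{n\times d}$ be fixed with $\|\vec Q\|_F\le\sqrt d\,\lambda$, let $\vec U=[\vec u_1,\dots,\vec u_n]^T$ with $\vec u_i\sim\mathcal N(0,\frac{\sigma_u^2}{n}I_d)$ independent, let $\vec w\ne 0$ be fixed, and define $\Delta_0$ by $\Delta_0\vec w^T\vec w=\vec w^T(\vec U^T\vec U+\vec U^T\vec Q+\vec Q^T\vec U)\vec w$. If $$\sigma_u\ge\frac{\sqrt{2d}\,\lambda\sqrt{\frac{\log(2/\gamma)}{n}}+\sqrt{2d\lambda^2\frac{\log(2/\gamma)}{n}+\frac{2\lambda}{\epsilon}\left(1-2\sqrt{\frac{\log(4/\gamma)}{n}}\right)}}{1-2\sqrt{\frac{\log(4/\gamma)}{n}}},$$ then with probability at least $1-\gamma$, $\frac{2\lambda}{\epsilon}\le\Delta_0\le\kappa(n,\gamma)$, where $\kappa(n,\gamma)=\sigma_u^2\left(1+2\sqrt{\frac{\log(4/\gamma)}{n}}+2\frac{\log(4/\gamma)}{n}\right)+2\sqrt{2d}\,\lambda\sigma_u\sqrt{\frac{\log(2/\gamma)}{n}}$.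
   Context: $\lambda>0$, $\sigma_u>0$; $n,d$ positive integers. *)

theory Defs
  imports "HOL-Probability.Probability"
begin

text \<open>Q is n x d given as a curried function; the random matrix U is a function on
  index pairs (i,j), i < n, j < d, living in the product measure space.\<close>

definition frob_norm :: "nat \<Rightarrow> nat \<Rightarrow> (nat \<Rightarrow> nat \<Rightarrow> real) \<Rightarrow> real" where
  "frob_norm n d Q = sqrt (\<Sum>i<n. \<Sum>j<d. (Q i j)\<^sup>2)"

text \<open>Distribution of U: all n*d entries independent N(0, sigma_u^2/n), i.e. the rows
  u_i are independent N(0, (sigma_u^2/n) I_d). Standard deviation is sigma_u / sqrt n.\<close>
definition gauss_matrix :: "nat \<Rightarrow> nat \<Rightarrow> real \<Rightarrow> (nat \<times> nat \<Rightarrow> real) measure" where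
  "gauss_matrix n d \<sigma>u =
     PiM ({..<n} \<times> {..<d}) (\<lambda>_. density lborel (normal_density 0 (\<sigma>u / sqrt (real n))))"

definition Delta0 :: "nat \<Rightarrow> nat \<Rightarrow> (nat \<Rightarrow> nat \<Rightarrow> real) \<Rightarrow> (nat \<Rightarrow> real)
                       \<Rightarrow> (nat \<times> nat \<Rightarrow> real) \<Rightarrow> real" where
  "Delta0 n d Q w U =
     (\<Sum>i<n. (\<Sum>j<d. U (i,j) * w j) * (\<Sum>j<d. U (i,j) * w j)
           + (\<Sum>j<d. U (i,j) * w j) * (\<Sum>j<d. Q i j * w j)
           + (\<Sum>j<d. Q i j * w j) * (\<Sum>j<d. U (i,j) * w j))
     / (\<Sum>j<d. w j * w j)"

definition kappa :: "nat \<Rightarrow> nat \<Rightarrow> real \<Rightarrow> real \<Rightarrow> real \<Rightarrow> real" where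
  "kappa n d lam \<sigma>u \<gamma> =
     \<sigma>u\<^sup>2 * (1 + 2 * sqrt (ln (4 / \<gamma>) / real n) + 2 * (ln (4 / \<gamma>) / real n))
     + 2 * sqrt (2 * real d) * lam * \<sigma>u * sqrt (ln (2 / \<gamma>) / real n)"

end

theory Submission
  imports Defs
begin


lemma (in prob_space) lincomb_normal:
  fixes X :: "'i \<Rightarrow> 'a \<Rightarrow> real"
  assumes fin: "finite K" and ind: "indep_vars (\<lambda>_. borel) X K"
    and s: "s > 0" and D: "\<And>k. k \<in> K \<Longrightarrow> distributed M lborel (X k) (normal_density 0 s)"
    and nz: "\<exists>k\<in>K. c k \<noteq> 0"
  shows "distributed M lborel (\<lambda>\<omega>. \<Sum>k\<in>K. c k * X k \<omega>) (normal_density 0 (s * sqrt (\<Sum>k\<in>K. (c k)\<^sup>2)))"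
proof -
  define K' where "K' = {k\<in>K. c k \<noteq> 0}"
  have fin': "finite K'" "K' \<noteq> {}" "K' \<subseteq> K" using fin nz by (auto simp: K'_def)
  have ind': "indep_vars (\<lambda>_. borel) (\<lambda>k \<omega>. c k * X k \<omega>) K'"
    by (rule indep_vars_compose2[OF indep_vars_subset[OF ind fin'(3)]]) auto
  have D': "distributed M lborel (\<lambda>\<omega>. c k * X k \<omega>) (normal_density (0::real) (\<bar>c k\<bar> * s))" if "k \<in> K'" for k
  proof -
    have "distributed M lborel (\<lambda>x. 0 + c k * X k x) (normal_density (0 + c k * 0) (\<bar>c k\<bar> * s))"
      by (rule normal_density_affine) (use D that fin' s in \<open>auto simp: K'_def\<close>)
    then show ?thesis by simp
  qed
  have "distributed M lborel (\<lambda>\<omega>. \<Sum>k\<in>K'. c k * X k \<omega>)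
      (normal_density (\<Sum>k\<in>K'. 0) (sqrt (\<Sum>k\<in>K'. (\<bar>c k\<bar> * s)\<^sup>2)))"
    by (rule sum_indep_normal[OF fin'(1,2) ind']) (use s D' in \<open>auto simp: K'_def\<close>)
  moreover have "(\<lambda>\<omega>. \<Sum>k\<in>K'. c k * X k \<omega>) = (\<lambda>\<omega>. \<Sum>k\<in>K. c k * X k \<omega>)"
    by (intro ext sum.mono_neutral_left fin) (auto simp: K'_def)
  moreover have "(\<Sum>k\<in>K'. (\<bar>c k\<bar> * s)\<^sup>2) = s\<^sup>2 * (\<Sum>k\<in>K. (c k)\<^sup>2)"
  proof -
    have "(\<Sum>k\<in>K'. (\<bar>c k\<bar> * s)\<^sup>2) = s\<^sup>2 * (\<Sum>k\<in>K'. (c k)\<^sup>2)"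
      by (simp add: sum_distrib_left power_mult_distrib mult.commute)
    also have "(\<Sum>k\<in>K'. (c k)\<^sup>2) = (\<Sum>k\<in>K. (c k)\<^sup>2)"
      by (intro sum.mono_neutral_left fin) (auto simp: K'_def)
    finally show ?thesis .
  qed
  ultimately show ?thesis using s by (simp add: real_sqrt_mult)
qed

lemma (in prob_space) mgf_sq:
  assumes D: "distributed M lborel Z std_normal_density" and t: "t < 1/2"
  shows "(\<integral>\<^sup>+\<omega>. ennreal (exp (t * (Z \<omega>)\<^sup>2)) \<partial>M) = ennreal (1 / sqrt (1 - 2 * t))"
proof -
  define r where "r = 1 / sqrt (1 - 2 * t)"
  have r: "r > 0" using t by (simp add: r_def)
  have r2: "r\<^sup>2 = 1 / (1 - 2*t)" using t by (simp add: r_def power_divide)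
  have eq: "std_normal_density x * exp (t * x\<^sup>2) = r * normal_density 0 r x" for x
  proof -
    have "std_normal_density x * exp (t * x\<^sup>2) = exp (- x\<^sup>2 * (1 - 2*t) / 2) / sqrt (2*pi)"
    proof -
      have "exp (t * x\<^sup>2) * exp (- x\<^sup>2 / 2) = exp (- x\<^sup>2 * (1 - 2*t) / 2)"
        by (subst mult_exp_exp) (simp add: field_simps)
      then show ?thesis by (simp add: std_normal_density_def mult.commute)
    qed
    also have "\<dots> = r * normal_density 0 r x"
    proof -
      have r3: "r\<^sup>2 * x\<^sup>2 = x\<^sup>2 + t * (2 * (r\<^sup>2 * x\<^sup>2))"
        using t by (simp add: r2 field_simps)
      show ?thesis
        using r r2 t by (simp add: normal_density_def real_sqrt_mult field_simps) (use r3 in linarith)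
    qed
    finally show ?thesis .
  qed
  have "(\<integral>\<^sup>+\<omega>. ennreal (exp (t * (Z \<omega>)\<^sup>2)) \<partial>M) = (\<integral>\<^sup>+x. std_normal_density x * ennreal (exp (t * x\<^sup>2)) \<partial>lborel)"
    by (rule distributed_nn_integral[OF D, symmetric]) simp
  also have "\<dots> = (\<integral>\<^sup>+x. ennreal r * ennreal (normal_density 0 r x) \<partial>lborel)"
    by (intro nn_integral_cong) (simp add: eq[symmetric] r[THEN less_imp_le] flip: ennreal_mult)
  also have "\<dots> = ennreal r * (\<integral>\<^sup>+x. ennreal (normal_density 0 r x) \<partial>lborel)"
    by (rule nn_integral_cmult) simp
  also have "(\<integral>\<^sup>+x. ennreal (normal_density 0 r x) \<partial>lborel) = 1"
    by (subst nn_integral_eq_integral) (use r in auto)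
  finally show ?thesis by (simp add: r_def)
qed



lemma ln_ineq1:
  fixes y :: real assumes "0 \<le> y" "y < 1"
  shows "- ln (1 - y) \<le> y + y\<^sup>2 / (2 * (1 - y))"
proof -
  define g where "g = (\<lambda>u::real. u + u\<^sup>2 / (2 * (1 - u)) + ln (1 - u))"
  have "g 0 \<le> g y"
  proof (rule DERIV_nonneg_imp_increasing_open[OF assms(1)])
    fix x assume x: "0 < x" "x < y"
    then have x1: "x < 1" using assms by simp
    have "DERIV g x :> 1 + (2 * x * (2 * (1 - x)) + x\<^sup>2 * 2) / (2 * (1 - x))\<^sup>2 + (-1) / (1 - x)"
      unfolding g_def using x1
      by (auto intro!: derivative_eq_intros simp: power2_eq_square)
    moreover have "1 + (2 * x * (2 * (1 - x)) + x\<^sup>2 * 2) / (2 * (1 - x))\<^sup>2 + (-1) / (1 - x)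
                   = x\<^sup>2 / (2 * (1 - x)\<^sup>2)"
    proof -
      have ne: "1 - x \<noteq> 0" using x1 by simp
      show ?thesis using ne by (simp add: divide_simps power2_eq_square) algebra
    qed
    ultimately show "\<exists>d. DERIV g x :> d \<and> d \<ge> 0" by auto
  next
    show "continuous_on {0..y} g" unfolding g_def using assms
      by (auto intro!: continuous_intros)
  qed
  then show ?thesis by (simp add: g_def)
qed

lemma ln_ineq2:
  fixes y :: real assumes "0 \<le> y"
  shows "y - y\<^sup>2 / 2 \<le> ln (1 + y)"
proof -
  define g where "g = (\<lambda>u::real. ln (1 + u) - u + u\<^sup>2 / 2)"
  have "g 0 \<le> g y"
  proof (rule DERIV_nonneg_imp_increasing_open[OF assms(1)])
    fix x assume x: "0 < x" "x < y"
    have "DERIV g x :> 1 / (1 + x) - 1 + x"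
      unfolding g_def using x
      by (auto intro!: derivative_eq_intros simp: power2_eq_square)
    moreover have "1 / (1 + x) - 1 + x = x\<^sup>2 / (1 + x)"
      using x by (simp add: field_simps power2_eq_square)
    ultimately show "\<exists>d. DERIV g x :> d \<and> d \<ge> 0" using x by auto
  next
    show "continuous_on {0..y} g" unfolding g_def using assms
      by (auto intro!: continuous_intros)
  qed
  then show ?thesis by (simp add: g_def)
qed



lemma (in prob_space) mgf_chi:
  fixes Z :: "'i \<Rightarrow> 'a \<Rightarrow> real"
  assumes fin: "finite I" and ind: "indep_vars (\<lambda>_. borel) Z I"
    and D: "\<And>i. i \<in> I \<Longrightarrow> distributed M lborel (Z i) std_normal_density"
    and t: "t < 1/2"
  shows "(\<integral>\<^sup>+\<omega>. ennreal (exp (t * (\<Sum>i\<in>I. (Z i \<omega>)\<^sup>2))) \<partial>M)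
         = ennreal ((1 / sqrt (1 - 2 * t)) ^ card I)"
proof -
  have "(\<integral>\<^sup>+\<omega>. ennreal (exp (t * (\<Sum>i\<in>I. (Z i \<omega>)\<^sup>2))) \<partial>M)
      = (\<integral>\<^sup>+\<omega>. (\<Prod>i\<in>I. ennreal (exp (t * (Z i \<omega>)\<^sup>2))) \<partial>M)"
    by (intro nn_integral_cong) (simp add: sum_distrib_left exp_sum fin prod_ennreal)
  also have "\<dots> = (\<Prod>i\<in>I. \<integral>\<^sup>+\<omega>. ennreal (exp (t * (Z i \<omega>)\<^sup>2)) \<partial>M)"
    by (intro indep_vars_nn_integral fin indep_vars_compose2[OF ind]) auto
  also have "\<dots> = (\<Prod>i\<in>I. ennreal (1 / sqrt (1 - 2 * t)))"
    by (intro prod.cong refl mgf_sq D t)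
  also have "\<dots> = ennreal ((1 / sqrt (1 - 2 * t)) ^ card I)"
    using t by (simp add: ennreal_power)
  finally show ?thesis .
qed

lemma (in prob_space) chi_upper:
  fixes Z :: "'i \<Rightarrow> 'a \<Rightarrow> real" and x :: real
  assumes fin: "finite I" "I \<noteq> {}" and ind: "indep_vars (\<lambda>_. borel) Z I"
    and D: "\<And>i. i \<in> I \<Longrightarrow> distributed M lborel (Z i) std_normal_density"
    and x: "x > 0"
  shows "prob {\<omega>\<in>space M. (\<Sum>i\<in>I. (Z i \<omega>)\<^sup>2) \<ge> real (card I) + 2 * sqrt (real (card I) * x) + 2 * x} \<le> exp (- x)"
proof -
  define m where "m = real (card I)"
  have m: "m > 0" using fin by (simp add: m_def card_gt_0_iff)
  define r where "r = sqrt (x / m)"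
  have r: "r > 0" using x m by (simp add: r_def)
  have xr: "x = m * r\<^sup>2" using x m by (simp add: r_def)
  have sq: "sqrt (m * x) = m * r" using m r by (simp add: xr real_sqrt_mult power2_eq_square)
  define t where "t = r / (1 + 2 * r)"
  have t: "t > 0" "t < 1/2" using r by (auto simp: t_def field_simps)
  have t1: "1 - 2 * t = 1 / (1 + 2 * r)" using r by (simp add: t_def field_simps)
  define a where "a = m + 2 * sqrt (m * x) + 2 * x"
  have [measurable]: "Z i \<in> borel_measurable M" if "i \<in> I" for i
    using distributed_measurable[OF D[OF that]] by simp
  have "emeasure M {\<omega>\<in>space M. (\<Sum>i\<in>I. (Z i \<omega>)\<^sup>2) \<ge> a}
      \<le> ennreal (exp (-t * a)) * (\<integral>\<^sup>+\<omega>. ennreal (exp (t * (\<Sum>i\<in>I. (Z i \<omega>)\<^sup>2))) * indicator (space M) \<omega> \<partial>M)"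
    by (intro Chernoff_ineq_nn_integral_ge t) auto
  also have "\<dots> = ennreal (exp (-t * a) * (1 / sqrt (1 - 2 * t)) ^ card I)"
    using t by (simp add: mgf_chi[OF fin(1) ind D t(2)] flip: ennreal_mult)
  also have "exp (-t * a) * (1 / sqrt (1 - 2 * t)) ^ card I = exp (-t * a - m / 2 * ln (1 - 2 * t))"
  proof -
    have "(1 / sqrt (1 - 2 * t)) = exp (- ln (1 - 2 * t) / 2)"
    proof -
      have "sqrt (1 - 2 * t) = exp (ln (1 - 2 * t) / 2)"
        using t powr_half_sqrt[of "1 - 2 * t"] by (simp add: powr_def)
      then show ?thesis by (simp add: exp_minus inverse_eq_divide)
    qed
    then have "(1 / sqrt (1 - 2 * t)) ^ card I = exp (- ln (1 - 2 * t) / 2) ^ card I"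
      by simp
    also have "\<dots> = exp (m * (- ln (1 - 2 * t) / 2))"
      unfolding m_def by (rule exp_of_nat_mult[symmetric])
    finally have "(1 / sqrt (1 - 2 * t)) ^ card I = exp (m * (- ln (1 - 2 * t) / 2))" .
    then have "exp (-t * a) * (1 / sqrt (1 - 2 * t)) ^ card I = exp (-t * a + m * (- ln (1 - 2 * t) / 2))"
      by (simp only: mult_exp_exp)
    then show ?thesis by simp
  qed
  also have "ennreal (exp (-t * a - m / 2 * ln (1 - 2 * t))) \<le> ennreal (exp (- x))"
  proof (rule ennreal_leI)
    have "- ln (1 - 2 * t) \<le> 2 * t + (2 * t)\<^sup>2 / (2 * (1 - 2 * t))"
      using ln_ineq1[of "2 * t"] t by simp
    then have "m / 2 * (- ln (1 - 2 * t)) \<le> m / 2 * (2 * t + (2 * t)\<^sup>2 / (2 * (1 - 2 * t)))"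
      by (rule mult_left_mono) (use m in simp)
    moreover have "-t * a + m / 2 * (2 * t + (2 * t)\<^sup>2 / (2 * (1 - 2 * t))) = - x"
    proof -
      have a: "a = m + 2 * m * r + 2 * m * r\<^sup>2" unfolding a_def sq by (subst xr) simp
      have q: "(2 * t)\<^sup>2 / (2 * (1 - 2 * t)) = 2 * r\<^sup>2 / (1 + 2 * r)"
        unfolding t1 using r apply (simp add: t_def field_simps power2_eq_square)
        apply (subst divide_eq_eq) apply auto
         apply algebra
        by (smt (verit) mult_pos_pos)
      have "-t * a + m / 2 * (2 * t + (2 * t)\<^sup>2 / (2 * (1 - 2 * t)))
            = - m * r\<^sup>2"
        unfolding q a using r apply (simp add: t_def field_simps power2_eq_square)
        apply (subst divide_eq_eq) apply auto
         apply algebra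
        by (smt (verit) mult_pos_pos)
      then show ?thesis by (simp add: xr)
    qed
    ultimately have "-t * a - m / 2 * ln (1 - 2 * t) \<le> - x" by (simp add: algebra_simps)
    then show "exp (-t * a - m / 2 * ln (1 - 2 * t)) \<le> exp (- x)" by simp
  qed
  finally have "ennreal (prob {\<omega>\<in>space M. (\<Sum>i\<in>I. (Z i \<omega>)\<^sup>2) \<ge> a}) \<le> ennreal (exp (- x))"
    by (simp add: emeasure_eq_measure)
  then show ?thesis by (simp add: a_def m_def)
qed

lemma (in prob_space) chi_lower:
  fixes Z :: "'i \<Rightarrow> 'a \<Rightarrow> real" and x :: real
  assumes fin: "finite I" "I \<noteq> {}" and ind: "indep_vars (\<lambda>_. borel) Z I"
    and D: "\<And>i. i \<in> I \<Longrightarrow> distributed M lborel (Z i) std_normal_density"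
    and x: "x > 0"
  shows "prob {\<omega>\<in>space M. (\<Sum>i\<in>I. (Z i \<omega>)\<^sup>2) \<le> real (card I) - 2 * sqrt (real (card I) * x)} \<le> exp (- x)"
proof -
  define m where "m = real (card I)"
  have m: "m > 0" using fin by (simp add: m_def card_gt_0_iff)
  define r where "r = sqrt (x / m)"
  have r: "r > 0" using x m by (simp add: r_def)
  have xr: "x = m * r\<^sup>2" using x m by (simp add: r_def)
  have sq: "sqrt (m * x) = m * r" using m r by (simp add: xr real_sqrt_mult power2_eq_square)
  define t where "t = r"
  have t: "t > 0" using r by (simp add: t_def)
  define a where "a = m - 2 * sqrt (m * x)"
  have [measurable]: "Z i \<in> borel_measurable M" if "i \<in> I" for i
    using distributed_measurable[OF D[OF that]] by simp
  have "emeasure M {\<omega>\<in>space M. (\<Sum>i\<in>I. (Z i \<omega>)\<^sup>2) \<le> a}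
      \<le> ennreal (exp (t * a)) * (\<integral>\<^sup>+\<omega>. ennreal (exp (- t * (\<Sum>i\<in>I. (Z i \<omega>)\<^sup>2))) * indicator (space M) \<omega> \<partial>M)"
    by (intro Chernoff_ineq_nn_integral_le t) auto
  also have "\<dots> = ennreal (exp (t * a) * (1 / sqrt (1 - 2 * (-t))) ^ card I)"
    using t mgf_chi[OF fin(1) ind D, of "-t"] by (simp flip: ennreal_mult)
  also have "exp (t * a) * (1 / sqrt (1 - 2 * (-t))) ^ card I = exp (t * a - m / 2 * ln (1 + 2 * t))"
  proof -
    have "(1 / sqrt (1 - 2 * (-t))) = exp (- ln (1 + 2 * t) / 2)"
    proof -
      have "sqrt (1 + 2 * t) = exp (ln (1 + 2 * t) / 2)"
        using t powr_half_sqrt[of "1 + 2 * t"] by (simp add: powr_def)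
      then show ?thesis by (simp add: exp_minus inverse_eq_divide)
    qed
    then have "(1 / sqrt (1 - 2 * (-t))) ^ card I = exp (- ln (1 + 2 * t) / 2) ^ card I"
      by simp
    also have "\<dots> = exp (m * (- ln (1 + 2 * t) / 2))"
      unfolding m_def by (rule exp_of_nat_mult[symmetric])
    finally have "(1 / sqrt (1 - 2 * (-t))) ^ card I = exp (m * (- ln (1 + 2 * t) / 2))" .
    then have "exp (t * a) * (1 / sqrt (1 - 2 * (-t))) ^ card I = exp (t * a + m * (- ln (1 + 2 * t) / 2))"
      by (simp only: mult_exp_exp)
    then show ?thesis by simp
  qed
  also have "ennreal (exp (t * a - m / 2 * ln (1 + 2 * t))) \<le> ennreal (exp (- x))"
  proof (rule ennreal_leI)
    have "2 * t - (2 * t)\<^sup>2 / 2 \<le> ln (1 + 2 * t)"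
      using ln_ineq2[of "2 * t"] t by simp
    then have "m / 2 * (2 * t - (2 * t)\<^sup>2 / 2) \<le> m / 2 * ln (1 + 2 * t)"
      by (rule mult_left_mono) (use m in simp)
    moreover have "t * a - m / 2 * (2 * t - (2 * t)\<^sup>2 / 2) = - x"
    proof -
      have a: "a = m - 2 * m * r" unfolding a_def sq by simp
      show ?thesis unfolding a t_def by (subst xr) (simp add: algebra_simps power2_eq_square)
    qed
    ultimately have "t * a - m / 2 * ln (1 + 2 * t) \<le> - x" by (simp add: algebra_simps)
    then show "exp (t * a - m / 2 * ln (1 + 2 * t)) \<le> exp (- x)" by simp
  qed
  finally have "ennreal (prob {\<omega>\<in>space M. (\<Sum>i\<in>I. (Z i \<omega>)\<^sup>2) \<le> a}) \<le> ennreal (exp (- x))"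
    by (simp add: emeasure_eq_measure)
  then show ?thesis by (simp add: a_def m_def)
qed



lemma half_normal:
  assumes "\<tau> > 0"
  shows "(\<integral>\<^sup>+z. ennreal (normal_density 0 \<tau> z) * indicator {0..} z \<partial>lborel) = ennreal (1/2)"
proof -
  let ?f = "\<lambda>z. ennreal (normal_density 0 \<tau> z)"
  define H where "H = (\<integral>\<^sup>+z. ?f z * indicator {0..} z \<partial>lborel)"
  have sym: "normal_density 0 \<tau> (- z) = normal_density 0 \<tau> z" for z
    by (simp add: normal_density_def)
  have "(\<integral>\<^sup>+z. ?f z * indicator {..0} z \<partial>lborel) = ennreal \<bar>-1\<bar> * (\<integral>\<^sup>+z. ?f (0 + (-1) * z) * indicator {..0} (0 + (-1) * z) \<partial>lborel)"
    by (rule nn_integral_real_affine) auto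
  also have "\<dots> = H"
    unfolding H_def by (simp add: sym) (auto intro!: nn_integral_cong split: split_indicator)
  finally have H1: "(\<integral>\<^sup>+z. ?f z * indicator {..0} z \<partial>lborel) = H" .
  have "(\<integral>\<^sup>+z. ?f z * indicator {..<0} z \<partial>lborel) = (\<integral>\<^sup>+z. ?f z * indicator {..0} z \<partial>lborel)"
    by (intro nn_integral_cong_AE eventually_mono[OF AE_lborel_singleton[of 0]])
       (auto split: split_indicator)
  then have H2: "(\<integral>\<^sup>+z. ?f z * indicator {..<0} z \<partial>lborel) = H" by (simp only: H1)
  have "1 = (\<integral>\<^sup>+z. ?f z \<partial>lborel)"
    by (subst nn_integral_eq_integral) (use assms in auto)
  also have "\<dots> = (\<integral>\<^sup>+z. ?f z * indicator {0..} z + ?f z * indicator {..<0} z \<partial>lborel)"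
    by (intro nn_integral_cong) (auto split: split_indicator)
  also have "\<dots> = H + H"
    by (subst nn_integral_add) (simp_all add: H_def[symmetric] H2)
  finally have HH: "H + H = 1" by simp
  then have "H \<noteq> \<top>" by auto
  then obtain h where h: "H = ennreal h" "h \<ge> 0" by (cases H) auto
  with HH have "ennreal (h + h) = 1" by (simp add: ennreal_plus[symmetric] del: ennreal_plus)
  then have "h + h = 1" using h by (simp add: ennreal_eq_1)
  then have h2: "h = 1/2" by simp
  show ?thesis unfolding H_def[symmetric] by (simp only: h(1) h2)
qed

lemma (in prob_space) normal_tail:
  assumes D: "distributed M lborel X (normal_density 0 \<tau>)" and \<tau>: "\<tau> > 0" and u: "u \<ge> 0"
  shows "prob {\<omega>\<in>space M. X \<omega> \<ge> u} \<le> exp (- u\<^sup>2 / (2 * \<tau>\<^sup>2)) / 2"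
proof -
  define E where "E = exp (- u\<^sup>2 / (2 * \<tau>\<^sup>2))"
  have E: "E > 0" by (simp add: E_def)
  have bound: "normal_density 0 \<tau> (u + z) \<le> E * normal_density 0 \<tau> z" if "z \<ge> 0" for z
  proof -
    have "normal_density 0 \<tau> (u + z) = normal_density 0 \<tau> z * (E * exp (- (u * z) / \<tau>\<^sup>2))"
    proof -
      have "- (u + z)\<^sup>2 / (2 * \<tau>\<^sup>2) = - z\<^sup>2 / (2 * \<tau>\<^sup>2) + (- u\<^sup>2 / (2 * \<tau>\<^sup>2) + - (u * z) / \<tau>\<^sup>2)"
        using \<tau> by (simp add: field_simps power2_eq_square)
      then show ?thesis unfolding normal_density_def E_def
        by (simp add: mult_exp_exp)
    qed
    also have "\<dots> \<le> normal_density 0 \<tau> z * (E * 1)"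
      using that u \<tau> E by (intro mult_left_mono) (auto simp: divide_nonneg_pos)
    finally show ?thesis by (simp add: mult.commute)
  qed
  have "{\<omega>\<in>space M. X \<omega> \<ge> u} = X -` {u..} \<inter> space M" by auto
  then have "emeasure M {\<omega>\<in>space M. X \<omega> \<ge> u} = (\<integral>\<^sup>+y. ennreal (normal_density 0 \<tau> y) * indicator {u..} y \<partial>lborel)"
    using distributed_emeasure[OF D, of "{u..}"] by simp
  also have "\<dots> = ennreal \<bar>1\<bar> * (\<integral>\<^sup>+z. ennreal (normal_density 0 \<tau> (u + 1 * z)) * indicator {u..} (u + 1 * z) \<partial>lborel)"
    by (rule nn_integral_real_affine) auto
  also have "\<dots> = (\<integral>\<^sup>+z. ennreal (normal_density 0 \<tau> (u + z)) * indicator {0..} z \<partial>lborel)"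
    by (auto intro!: nn_integral_cong split: split_indicator)
  also have "\<dots> \<le> (\<integral>\<^sup>+z. ennreal E * (ennreal (normal_density 0 \<tau> z) * indicator {0..} z) \<partial>lborel)"
    using bound E by (intro nn_integral_mono) (auto split: split_indicator simp flip: ennreal_mult intro!: ennreal_leI)
  also have "\<dots> = ennreal E * ennreal (1/2)"
    by (subst nn_integral_cmult) (auto simp: half_normal[OF \<tau>])
  also have "\<dots> = ennreal (E / 2)" using E by (subst ennreal_mult[symmetric]) auto
  finally have "ennreal (prob {\<omega>\<in>space M. X \<omega> \<ge> u}) \<le> ennreal (E / 2)"
    by (simp add: emeasure_eq_measure)
  then show ?thesis using E by (simp add: E_def)
qed



locale gprod =
  fixes I :: "'i set" and s :: real
  assumes finI: "finite I" and neI: "I \<noteq> {}" and s_pos: "s > 0"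
begin

definition "G = density lborel (normal_density 0 s)"
definition "MM = PiM I (\<lambda>_. G)"

lemma G_prob: "prob_space G"
  unfolding G_def using s_pos by (rule prob_space_normal_density)

lemma sets_G[measurable_cong, simp]: "sets G = sets borel"
  by (simp add: G_def)

lemma MM_prob: "prob_space MM"
  unfolding MM_def by (intro prob_space_PiM G_prob)

lemma P_prod: "product_prob_space (\<lambda>_. G)"
  by (intro product_prob_spaceI G_prob)

lemma coord_meas: "k \<in> I \<Longrightarrow> (\<lambda>U. U k) \<in> borel_measurable MM"
  unfolding MM_def
  by (metis measurable_component_singleton measurable_cong_sets sets_G sets_lborel)

lemma coord_dist: "k \<in> I \<Longrightarrow> distributed MM lborel (\<lambda>U. U k) (normal_density 0 s)"
proof -
  assume k: "k \<in> I"
  have "distr MM lborel (\<lambda>U. U k) = distr MM G (\<lambda>U. U k)"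
    by (intro distr_cong) auto
  also have "\<dots> = G" unfolding MM_def by (rule distr_PiM_component[OF G_prob k])
  finally show ?thesis
    unfolding distributed_def using coord_meas[OF k] by (simp add: G_def)
qed

lemma coord_indep: "prob_space.indep_vars MM (\<lambda>_. borel) (\<lambda>k U. U k) I"
proof -
  note False = neI
  interpret M: prob_space MM by (rule MM_prob)
  have "M.indep_vars (\<lambda>_. G) (\<lambda>k U. U k) I"
  proof (subst M.indep_vars_iff_distr_eq_PiM'[OF False])
    show "M.random_variable G (\<lambda>U. U i)" if "i \<in> I" for i
      unfolding MM_def by (rule measurable_component_singleton[OF that])
    have "distr MM (Pi\<^sub>M I (\<lambda>_. G)) (\<lambda>x. restrict x I) = MM"
      unfolding MM_def by (rule product_prob_space.distr_PiM_restrict_finite[OF P_prod finI subset_refl])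
    also have "MM = Pi\<^sub>M I (\<lambda>i. distr MM G (\<lambda>U. U i))"
      unfolding MM_def
      by (rule PiM_cong) (simp_all add: distr_PiM_component[OF G_prob])
    finally show "distr MM (Pi\<^sub>M I (\<lambda>_. G)) (\<lambda>x. \<lambda>i\<in>I. x i) = Pi\<^sub>M I (\<lambda>i. distr MM G (\<lambda>U. U i))"
      by simp
  qed
  then have "M.indep_vars (\<lambda>_. borel) (\<lambda>k U. (\<lambda>x. x) (U k)) I"
    by (rule M.indep_vars_compose2) (rule measurable_ident_sets, simp)
  then show ?thesis by simp
qed

end



lemma quad_lemma:
  fixes a b c \<sigma> :: real
  assumes a: "a > 0" and b: "b \<ge> 0" and c: "c \<ge> 0" and \<sigma>: "\<sigma> \<ge> (b + sqrt (b\<^sup>2 + c * a)) / a"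
  shows "a * \<sigma>\<^sup>2 - 2 * b * \<sigma> \<ge> c"
proof -
  have "a * \<sigma> \<ge> b + sqrt (b\<^sup>2 + c * a)" using \<sigma> a by (simp add: field_simps)
  then have h: "a * \<sigma> - b \<ge> sqrt (b\<^sup>2 + c * a)" by simp
  have "sqrt (b\<^sup>2 + c * a) \<ge> 0" using a c by simp
  then have "(a * \<sigma> - b)\<^sup>2 \<ge> (sqrt (b\<^sup>2 + c * a))\<^sup>2"
    using h by (intro power_mono) auto
  also have "(sqrt (b\<^sup>2 + c * a))\<^sup>2 = b\<^sup>2 + c * a" using b c a by simp
  finally have "a * (a * \<sigma>\<^sup>2 - 2 * b * \<sigma>) \<ge> a * c"
    by (simp add: power2_eq_square algebra_simps)
  then show ?thesis using a by simp
qed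

context gprod
begin

lemma lincomb_dist:
  assumes "\<exists>k\<in>I. c k \<noteq> 0"
  shows "distributed MM lborel (\<lambda>U. \<Sum>k\<in>I. c k * U k) (normal_density 0 (s * sqrt (\<Sum>k\<in>I. (c k)\<^sup>2)))"
  by (rule prob_space.lincomb_normal[OF MM_prob finI coord_indep s_pos coord_dist assms])

end

theorem corollary2:
  fixes n d :: nat and lam \<sigma>u \<gamma> \<epsilon> :: real
    and Q :: "nat \<Rightarrow> nat \<Rightarrow> real" and w :: "nat \<Rightarrow> real"
  assumes "lam > 0" "\<sigma>u > 0" "n > 0" "d > 0"
    and "0 < \<gamma>" "\<gamma> \<le> 1"
    and "1 - 2 * sqrt (ln (4 / \<gamma>) / real n) > 0"
    and "\<epsilon> > 0"
    and "frob_norm n d Q \<le> sqrt (real d) * lam"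
    and "\<exists>j<d. w j \<noteq> 0"
    and "\<sigma>u \<ge> (sqrt (2 * real d) * lam * sqrt (ln (2 / \<gamma>) / real n)
                 + sqrt (2 * real d * lam\<^sup>2 * (ln (2 / \<gamma>) / real n)
                         + (2 * lam / \<epsilon>) * (1 - 2 * sqrt (ln (4 / \<gamma>) / real n))))
               / (1 - 2 * sqrt (ln (4 / \<gamma>) / real n))"
  shows "measure (gauss_matrix n d \<sigma>u)
           {U \<in> space (gauss_matrix n d \<sigma>u).
              2 * lam / \<epsilon> \<le> Delta0 n d Q w U \<and> Delta0 n d Q w U \<le> kappa n d lam \<sigma>u \<gamma>}
         \<ge> 1 - \<gamma>"
proof -
  note lam = assms(1) and \<sigma>pos = assms(2) and n = assms(3) and d = assms(4)
    and \<gamma> = assms(5,6) and apos = assms(7) and \<epsilon> = assms(8) and frob = assms(9)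
    and wnz = assms(10) and \<sigma>ge = assms(11)
  define I where "I = {..<n} \<times> {..<d}"
  define s where "s = \<sigma>u / sqrt (real n)"
  have s: "s > 0" using \<sigma>pos n by (simp add: s_def)
  have gp: "gprod I s"
    by unfold_locales (use n d s in \<open>auto simp: I_def\<close>)
  interpret gprod I s by (rule gp)
  have Meq: "gauss_matrix n d \<sigma>u = MM"
    unfolding gprod.MM_def[OF gp] gprod.G_def[OF gp] by (simp add: gauss_matrix_def I_def s_def)
  interpret M: prob_space MM by (rule MM_prob)
  define W where "W = (\<Sum>j<d. w j * w j)"
  have W: "W > 0"
  proof -
    obtain j where j: "j < d" "w j \<noteq> 0" using wnz by blast
    have "w j * w j \<le> W" unfolding W_def
      by (rule member_le_sum[of j "{..<d}" "\<lambda>j. w j * w j"]) (use j in auto)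
    moreover have "w j * w j > 0" using j(2) by (auto simp: zero_less_mult_iff)
    ultimately show ?thesis by simp
  qed
  define A where "A i U = (\<Sum>j<d. U (i,j) * w j)" for i and U :: "nat \<times> nat \<Rightarrow> real"
  define p where "p i = (\<Sum>j<d. Q i j * w j)" for i
  define \<tau> where "\<tau> = s * sqrt W"
  have \<tau>: "\<tau> > 0" using s W by (simp add: \<tau>_def)
  define Z where "Z i U = A i U / \<tau>" for i U
  define S where "S U = (\<Sum>i<n. (Z i U)\<^sup>2)" for U
  define C where "C U = (\<Sum>i<n. A i U * p i)" for U
  define P where "P = (\<Sum>i<n. (p i)\<^sup>2)"
  define x where "x = ln (4 / \<gamma>)"
  define L where "L = ln (2 / \<gamma>)"
  have x: "x > 0" using \<gamma> by (simp add: x_def)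
  have L: "L > 0" using \<gamma> by (simp add: L_def)
  have expx: "exp (- x) = \<gamma> / 4" using \<gamma> by (simp add: x_def exp_minus)
  have expL: "exp (- L) = \<gamma> / 2" using \<gamma> by (simp add: L_def exp_minus)

  obtain j0 where j0: "j0 < d" "w j0 \<noteq> 0" using wnz by blast
  have A_dist: "distributed MM lborel (A i) (normal_density 0 \<tau>)" if i: "i < n" for i
  proof -
    define c where "c k = (if fst k = i then w (snd k) else 0)" for k :: "nat \<times> nat"
    have nz: "\<exists>k\<in>I. c k \<noteq> 0"
      using j0 i by (intro bexI[of _ "(i, j0)"]) (auto simp: I_def c_def)
    have eq1: "(\<lambda>U. \<Sum>k\<in>I. c k * U k) = A i"
    proof
      fix U :: "nat \<times> nat \<Rightarrow> real"
      have "(\<Sum>k\<in>I. c k * U k) = (\<Sum>a<n. \<Sum>b<d. c (a, b) * U (a, b))"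
        by (simp add: I_def sum.cartesian_product')
      also have "\<dots> = (\<Sum>a<n. if a = i then A i U else 0)"
        by (intro sum.cong refl) (auto simp: c_def A_def mult.commute)
      also have "\<dots> = A i U" using i by simp
      finally show "(\<Sum>k\<in>I. c k * U k) = A i U" .
    qed
    have eq2: "(\<Sum>k\<in>I. (c k)\<^sup>2) = W"
    proof -
      have "(\<Sum>k\<in>I. (c k)\<^sup>2) = (\<Sum>a<n. \<Sum>b<d. (c (a, b))\<^sup>2)"
        by (simp add: I_def sum.cartesian_product')
      also have "\<dots> = (\<Sum>a<n. if a = i then W else 0)"
        by (intro sum.cong refl) (auto simp: c_def W_def power2_eq_square)
      also have "\<dots> = W" using i by simp
      finally show ?thesis .
    qed
    show ?thesis using lincomb_dist[OF nz] unfolding eq1 eq2 \<tau>_def .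
  qed
  have Z_dist: "distributed MM lborel (Z i) std_normal_density" if i: "i < n" for i
  proof -
    have "distributed MM lborel (\<lambda>x. 0 + (1 / \<tau>) * A i x) (normal_density (0 + (1 / \<tau>) * 0) (\<bar>1 / \<tau>\<bar> * \<tau>))"
      by (rule M.normal_density_affine[OF A_dist[OF i] \<tau>]) (use \<tau> in simp)
    then show ?thesis using \<tau> by (simp add: Z_def[abs_def])
  qed
  have Z_indep: "M.indep_vars (\<lambda>_. borel) Z {..<n}"
  proof -
    have "M.indep_vars (\<lambda>i. PiM ({i} \<times> {..<d}) (\<lambda>_. borel)) (\<lambda>i \<omega>. restrict (\<lambda>k. \<omega> k) ({i} \<times> {..<d})) {..<n}"
      by (rule M.indep_vars_restrict[OF coord_indep]) (auto simp: I_def disjoint_family_on_def)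
    then have "M.indep_vars (\<lambda>_. borel) (\<lambda>i \<omega>. (\<lambda>f. (\<Sum>j<d. f (i, j) * w j) / \<tau>) (restrict (\<lambda>k. \<omega> k) ({i} \<times> {..<d}))) {..<n}"
    proof (rule M.indep_vars_compose2)
      fix i assume "i \<in> {..<n}"
      show "(\<lambda>f. (\<Sum>j<d. f (i, j) * w j) / \<tau>) \<in> borel_measurable (PiM ({i} \<times> {..<d}) (\<lambda>_. borel))"
        by (intro borel_measurable_divide borel_measurable_const borel_measurable_sum borel_measurable_times
              measurable_component_singleton) auto
    qed
    moreover have "(\<lambda>\<omega>. (\<lambda>f. (\<Sum>j<d. f (i, j) * w j) / \<tau>) (restrict (\<lambda>k. \<omega> k) ({i} \<times> {..<d}))) = Z i" for i
      by (auto intro!: ext sum.cong simp: Z_def A_def)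
    ultimately show ?thesis by simp
  qed
  have Z_meas[measurable]: "Z i \<in> borel_measurable MM" if "i < n" for i
    using distributed_measurable[OF Z_dist[OF that]] by simp
  have S_meas[measurable]: "S \<in> borel_measurable MM" unfolding S_def by measurable
  have A_meas: "A i \<in> borel_measurable MM" if "i < n" for i
    using distributed_measurable[OF A_dist[OF that]] by simp
  have C_meas[measurable]: "C \<in> borel_measurable MM"
    unfolding C_def by (intro borel_measurable_sum borel_measurable_times A_meas borel_measurable_const) auto
  have Delta_eq: "Delta0 n d Q w U = s\<^sup>2 * S U + 2 * C U / W" for U
  proof -
    have "Delta0 n d Q w U = (\<Sum>i<n. (A i U)\<^sup>2 + 2 * (A i U * p i)) / W"
      unfolding Delta0_def A_def p_def W_def
      by (intro arg_cong2[where f="(/)"] sum.cong refl) (simp add: power2_eq_square algebra_simps)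
    also have "\<dots> = (\<Sum>i<n. (A i U)\<^sup>2) / W + 2 * C U / W"
      by (simp add: sum.distrib C_def sum_distrib_left add_divide_distrib)
    also have "(\<Sum>i<n. (A i U)\<^sup>2) / W = s\<^sup>2 * S U"
    proof -
      have "S U = (\<Sum>i<n. (A i U)\<^sup>2) / \<tau>\<^sup>2"
        by (simp add: S_def Z_def power_divide sum_divide_distrib)
      moreover have "\<tau>\<^sup>2 = s\<^sup>2 * W" using W by (simp add: \<tau>_def power_mult_distrib)
      ultimately show ?thesis using W s by (simp add: field_simps)
    qed
    finally show ?thesis .
  qed
  have D_meas[measurable]: "Delta0 n d Q w \<in> borel_measurable MM"
  proof -
    have "Delta0 n d Q w = (\<lambda>U. s\<^sup>2 * S U + 2 * C U / W)" by (intro ext Delta_eq)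
    moreover have "(\<lambda>U. s\<^sup>2 * S U + 2 * C U / W) \<in> borel_measurable MM" by measurable
    ultimately show ?thesis by simp
  qed

  define Up where "Up = real n + 2 * sqrt (real n * x) + 2 * x"
  define Lo where "Lo = real n - 2 * sqrt (real n * x)"
  define u where "u = s * sqrt (P * W) * sqrt (2 * L)"
  define B1 where "B1 = {U\<in>space MM. S U \<ge> Up}"
  define B2 where "B2 = {U\<in>space MM. S U \<le> Lo}"
  define B3 where "B3 = {U\<in>space MM. C U > u}"
  define B4 where "B4 = {U\<in>space MM. C U < - u}"
  have ne: "{..<n} \<noteq> {}" using n by auto
  have B1: "M.prob B1 \<le> \<gamma> / 4"
  proof -
    have "M.prob B1 \<le> exp (- x)"
      using M.chi_upper[of "{..<n}" Z x] Z_indep Z_dist x n ne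
      by (simp add: B1_def S_def Up_def)
    then show ?thesis by (simp add: expx)
  qed
  have B2: "M.prob B2 \<le> \<gamma> / 4"
  proof -
    have "M.prob B2 \<le> exp (- x)"
      using M.chi_lower[of "{..<n}" Z x] Z_indep Z_dist x n ne
      by (simp add: B2_def S_def Lo_def)
    then show ?thesis by (simp add: expx)
  qed
  have B34: "M.prob B3 \<le> \<gamma> / 4 \<and> M.prob B4 \<le> \<gamma> / 4"
  proof (cases "P = 0")
    case True
    then have "p i = 0" if "i < n" for i
      using that by (simp add: P_def sum_nonneg_eq_0_iff)
    then have "C U = 0" for U by (simp add: C_def)
    moreover have "u = 0" using True by (simp add: u_def)
    ultimately have "B3 = {}" "B4 = {}" by (auto simp: B3_def B4_def)
    then show ?thesis using \<gamma> by simp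
  next
    case False
    have P0: "P > 0" using False by (simp add: P_def order.not_eq_order_implies_strict sum_nonneg)
    obtain i0 where i0: "i0 < n" "p i0 \<noteq> 0"
      using False unfolding P_def by (metis (mono_tags, lifting) lessThan_iff power_zero_numeral sum.neutral)
    define c where "c k = p (fst k) * w (snd k)" for k :: "nat \<times> nat"
    have nz: "\<exists>k\<in>I. c k \<noteq> 0"
      using j0 i0 by (intro bexI[of _ "(i0, j0)"]) (auto simp: I_def c_def)
    have eq1: "(\<lambda>U. \<Sum>k\<in>I. c k * U k) = C"
    proof
      fix U :: "nat \<times> nat \<Rightarrow> real"
      have "(\<Sum>k\<in>I. c k * U k) = (\<Sum>a<n. \<Sum>b<d. c (a, b) * U (a, b))"
        by (simp add: I_def sum.cartesian_product')
      also have "\<dots> = C U"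
        unfolding C_def A_def c_def by (simp add: sum_distrib_right sum_distrib_left mult_ac)
      finally show "(\<Sum>k\<in>I. c k * U k) = C U" .
    qed
    have eq2: "(\<Sum>k\<in>I. (c k)\<^sup>2) = P * W"
    proof -
      have "(\<Sum>k\<in>I. (c k)\<^sup>2) = (\<Sum>a<n. \<Sum>b<d. (c (a, b))\<^sup>2)"
        by (simp add: I_def sum.cartesian_product')
      also have "\<dots> = P * W"
        unfolding P_def W_def c_def
        by (simp add: sum_distrib_right sum_distrib_left power2_eq_square mult_ac) (rule sum.swap)
      finally show ?thesis .
    qed
    define \<tau>c where "\<tau>c = s * sqrt (P * W)"
    have \<tau>c: "\<tau>c > 0" using s P0 W by (simp add: \<tau>c_def)
    have Cd: "distributed MM lborel C (normal_density 0 \<tau>c)"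
      using lincomb_dist[OF nz] unfolding eq1 eq2 \<tau>c_def .
    have Cd': "distributed MM lborel (\<lambda>U. - C U) (normal_density 0 \<tau>c)"
    proof -
      have "distributed MM lborel (\<lambda>x. 0 + (-1) * C x) (normal_density (0 + (-1) * 0) (\<bar>-1\<bar> * \<tau>c))"
        by (rule M.normal_density_affine[OF Cd \<tau>c]) simp
      then show ?thesis by simp
    qed
    have u: "u = \<tau>c * sqrt (2 * L)" by (simp add: u_def \<tau>c_def)
    have u0: "u \<ge> 0" using \<tau>c L by (simp add: u)
    have ex: "exp (- u\<^sup>2 / (2 * \<tau>c\<^sup>2)) / 2 = \<gamma> / 4"
    proof -
      have "u\<^sup>2 / (2 * \<tau>c\<^sup>2) = L" using \<tau>c L by (simp add: u power_mult_distrib)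
      then show ?thesis by (simp add: expL)
    qed
    have "M.prob B3 \<le> M.prob {U\<in>space MM. C U \<ge> u}"
      by (intro M.finite_measure_mono) (auto simp: B3_def)
    also have "\<dots> \<le> \<gamma> / 4" using M.normal_tail[OF Cd \<tau>c u0] ex by simp
    finally have 3: "M.prob B3 \<le> \<gamma> / 4" .
    have "M.prob B4 \<le> M.prob {U\<in>space MM. - C U \<ge> u}"
      by (intro M.finite_measure_mono) (auto simp: B4_def)
    also have "\<dots> \<le> \<gamma> / 4" using M.normal_tail[OF Cd' \<tau>c u0] ex by simp
    finally have 4: "M.prob B4 \<le> \<gamma> / 4" .
    show ?thesis using 3 4 by simp
  qed
  have P_le: "P \<le> real d * lam\<^sup>2 * W"
  proof -
    have "P \<le> (\<Sum>i<n. (\<Sum>j<d. (Q i j)\<^sup>2) * (\<Sum>j<d. (w j)\<^sup>2))"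
      unfolding P_def p_def by (intro sum_mono Cauchy_Schwarz_ineq_sum)
    also have "\<dots> = (\<Sum>i<n. \<Sum>j<d. (Q i j)\<^sup>2) * W"
      by (simp add: W_def sum_distrib_right power2_eq_square)
    also have "(\<Sum>i<n. \<Sum>j<d. (Q i j)\<^sup>2) \<le> real d * lam\<^sup>2"
    proof -
      have nn: "0 \<le> (\<Sum>i<n. \<Sum>j<d. (Q i j)\<^sup>2)" by (intro sum_nonneg) auto
      have "sqrt (\<Sum>i<n. \<Sum>j<d. (Q i j)\<^sup>2) \<le> sqrt (real d) * lam"
        using frob by (simp add: frob_norm_def)
      then have "(sqrt (\<Sum>i<n. \<Sum>j<d. (Q i j)\<^sup>2))\<^sup>2 \<le> (sqrt (real d) * lam)\<^sup>2"
        using nn by (intro power_mono) auto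
      then show ?thesis using nn by (simp add: power_mult_distrib)
    qed
    then have "(\<Sum>i<n. \<Sum>j<d. (Q i j)\<^sup>2) * W \<le> real d * lam\<^sup>2 * W"
      using W by (intro mult_right_mono) auto
    finally show ?thesis .
  qed
  have s2: "s\<^sup>2 = \<sigma>u\<^sup>2 / real n" by (simp add: s_def power_divide)
  have sn: "sqrt (real n * x) = real n * sqrt (x / real n)"
  proof -
    have "real n * sqrt (x / real n) = sqrt ((real n)\<^sup>2 * (x / real n))"
      by (simp only: real_sqrt_mult real_sqrt_abs abs_of_nat)
    also have "(real n)\<^sup>2 * (x / real n) = real n * x" using n by (simp add: power2_eq_square)
    finally show ?thesis by simp
  qed
  have k1: "s\<^sup>2 * Up = \<sigma>u\<^sup>2 * (1 + 2 * sqrt (x / real n) + 2 * (x / real n))"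
    unfolding Up_def sn s2 using n by (simp add: field_simps)
  have k2: "s\<^sup>2 * Lo = \<sigma>u\<^sup>2 * (1 - 2 * sqrt (x / real n))"
    unfolding Lo_def sn s2 using n by (simp add: field_simps)
  have k3: "u / W \<le> sqrt (2 * real d) * lam * \<sigma>u * sqrt (L / real n)"
  proof -
    have "sqrt (P * W) \<le> sqrt (real d * lam\<^sup>2 * W * W)"
      using P_le W by (intro real_sqrt_le_mono mult_right_mono) auto
    also have "\<dots> = sqrt (real d) * lam * W"
      using lam W by (simp add: real_sqrt_mult)
    finally have h: "sqrt (P * W) \<le> sqrt (real d) * lam * W" .
    have "u / W = s * sqrt (2 * L) * (sqrt (P * W) / W)" by (simp add: u_def)
    also have "\<dots> \<le> s * sqrt (2 * L) * (sqrt (real d) * lam)"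
      using h W s L by (intro mult_left_mono) (auto simp: divide_le_eq)
    also have "\<dots> = sqrt (2 * real d) * lam * \<sigma>u * sqrt (L / real n)"
      by (simp add: s_def real_sqrt_mult real_sqrt_divide)
    finally show ?thesis .
  qed
  have k4: "\<sigma>u\<^sup>2 * (1 - 2 * sqrt (x / real n)) - 2 * (sqrt (2 * real d) * lam * \<sigma>u * sqrt (L / real n)) \<ge> 2 * lam / \<epsilon>"
  proof -
    define a where "a = 1 - 2 * sqrt (x / real n)"
    define b where "b = sqrt (2 * real d) * lam * sqrt (L / real n)"
    define c where "c = 2 * lam / \<epsilon>"
    have a: "a > 0" using apos by (simp add: a_def x_def)
    have b: "b \<ge> 0" using lam L by (simp add: b_def)
    have c: "c \<ge> 0" using lam \<epsilon> by (simp add: c_def)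
    have bb: "b\<^sup>2 = 2 * real d * lam\<^sup>2 * (L / real n)"
      using L by (simp add: b_def power_mult_distrib)
    have "\<sigma>u \<ge> (b + sqrt (b\<^sup>2 + c * a)) / a"
      using \<sigma>ge unfolding bb by (simp add: a_def b_def c_def x_def L_def)
    then have "a * \<sigma>u\<^sup>2 - 2 * b * \<sigma>u \<ge> c" by (rule quad_lemma[OF a b c])
    then show ?thesis by (simp add: a_def b_def c_def algebra_simps)
  qed
  define T where "T = {U \<in> space MM. 2 * lam / \<epsilon> \<le> Delta0 n d Q w U \<and> Delta0 n d Q w U \<le> kappa n d lam \<sigma>u \<gamma>}"
  have sub: "space MM - (B1 \<union> B2 \<union> B3 \<union> B4) \<subseteq> T"
  proof
    fix U assume U: "U \<in> space MM - (B1 \<union> B2 \<union> B3 \<union> B4)"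
    then have sp: "U \<in> space MM" and h1: "S U < Up" and h2: "S U > Lo" and h3: "C U \<le> u" and h4: "C U \<ge> - u"
      by (auto simp: B1_def B2_def B3_def B4_def)
    define \<beta> where "\<beta> = sqrt (2 * real d) * lam * \<sigma>u * sqrt (L / real n)"
    have c1: "2 * C U / W \<le> 2 * \<beta>"
      using h3 k3 W by (simp add: \<beta>_def divide_le_eq field_simps)
    have c2: "2 * C U / W \<ge> - 2 * \<beta>"
      using h4 k3 W by (simp add: \<beta>_def le_divide_eq field_simps)
    have sU: "s\<^sup>2 * S U \<le> s\<^sup>2 * Up" using h1 s by (intro mult_left_mono) auto
    have sL: "s\<^sup>2 * S U \<ge> s\<^sup>2 * Lo" using h2 s by (intro mult_left_mono) auto
    have "Delta0 n d Q w U \<le> kappa n d lam \<sigma>u \<gamma>"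
      using sU c1 k1 unfolding Delta_eq kappa_def \<beta>_def x_def L_def by simp
    moreover have "2 * lam / \<epsilon> \<le> Delta0 n d Q w U"
      using sL c2 k2 k4 unfolding Delta_eq \<beta>_def by simp
    ultimately show "U \<in> T" using sp by (simp add: T_def)
  qed
  have Bsets: "B1 \<in> sets MM" "B2 \<in> sets MM" "B3 \<in> sets MM" "B4 \<in> sets MM"
    unfolding B1_def B2_def B3_def B4_def by measurable
  have Tset: "T \<in> sets MM" unfolding T_def by measurable
  have "M.prob (B1 \<union> B2 \<union> B3 \<union> B4) \<le> M.prob B1 + M.prob B2 + M.prob B3 + M.prob B4"
  proof -
    have "M.prob (B1 \<union> B2 \<union> B3 \<union> B4) \<le> M.prob (B1 \<union> B2 \<union> B3) + M.prob B4"
      using Bsets by (intro measure_Un_le) auto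
    also have "M.prob (B1 \<union> B2 \<union> B3) \<le> M.prob (B1 \<union> B2) + M.prob B3"
      using Bsets by (intro measure_Un_le) auto
    also have "M.prob (B1 \<union> B2) \<le> M.prob B1 + M.prob B2"
      using Bsets by (intro measure_Un_le) auto
    finally show ?thesis by simp
  qed
  also have "\<dots> \<le> \<gamma>" using B1 B2 B34 by simp
  finally have Bp: "M.prob (B1 \<union> B2 \<union> B3 \<union> B4) \<le> \<gamma>" .
  have "M.prob (space MM - (B1 \<union> B2 \<union> B3 \<union> B4)) \<le> M.prob T"
    using sub Tset by (intro M.finite_measure_mono) auto
  moreover have "M.prob (space MM - (B1 \<union> B2 \<union> B3 \<union> B4)) = 1 - M.prob (B1 \<union> B2 \<union> B3 \<union> B4)"
    using Bsets by (intro M.prob_compl) auto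
  ultimately have "M.prob T \<ge> 1 - \<gamma>" using Bp by simp
  then show ?thesis by (simp add: Meq T_def)
qed


end
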